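(* Let $m\ge2$, $\sigma_0=\pm1$ if $m$ is odd and $\sigma_0=(-1)^{m/2}$ if $m$ is even. Let $u_0\in\mathcal{F}_n$ for some $n<\infty$, and let $u$ be the solution of the Cauchy problem $\partial_t u+\sigma_0\partial_x^m u=0$, $u(x,0)=u_0(x)$, $x\in\mathbb{R}$. For $\tau>0$ let $q=(q_0,\dots,q_{m-1})$ be the solution of the hyperbolic system $$\partial_t q_0+\sigma_0\partial_x q_{m-1}=0,\qquad \tau\partial_t q_i+\sum_{j=1}^{m-1}p^*_{ij}\,\partial_x q_{j-1}=\sum_{j=1}^{m-1}p^*_{ij}\,q_j\quad(i=1,\dots,m-1),$$ with initial data $q_j(x,0)=\partial_x^j u_0(x)$, $j=0,\dots,m-1$. Then for every fixed $T\in[0,\infty)$, $$\sup_{x\in\mathbb{R}}|q_0(x,T)-u(x,T)|=\mathcal{O}(\tau)\quad\text{as }\tau\to0^+.$$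
   Context: $\mathcal{F}_n=\{v(x)=\sum_{j=1}^n\hat v_j e^{ik_jx}:\ \hat v_j,k_j\in\mathbb{R}\}$. The matrix $P^*=(p^*_{ij})_{i,j=1}^{m-1}$ is defined by $p^*_{ij}=0$ if $i+j\ne m$, $p^*_{ij}=\sigma_0(-1)^{j-1}$ if $i+j=m$ and $j\le m/2$, and $p^*_{ij}=\sigma_0(-1)^{m-j}$ if $i+j=m$ and $j>m/2$. For initial data in $\mathcal{F}_n$, both problems are solved mode by mode: each Fourier mode $e^{ik_jx}$ evolves independently, $u$ via $\hat u(t)=e^{-\sigma_0 t(ik_j)^m}\hat u(0)$ and $q$ via the linear ODE system obtained by substituting $q(x,t)=\hat q(t)e^{ik_jx}$. *)

theory Defs
  imports "HOL-Analysis.Analysis"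
begin

definition pstar :: "real \<Rightarrow> nat \<Rightarrow> nat \<Rightarrow> nat \<Rightarrow> real" where
  "pstar \<sigma>0 m i j =
     (if i + j \<noteq> m then 0
      else if 2 * j \<le> m then \<sigma>0 * (-1) ^ (j - 1)
      else \<sigma>0 * (-1) ^ (m - j))"

text \<open>Mode-by-mode solution of the Cauchy problem u_t + sigma0 d_x^m u = 0.\<close>
definition usol :: "nat \<Rightarrow> real \<Rightarrow> nat \<Rightarrow> (nat \<Rightarrow> real) \<Rightarrow> (nat \<Rightarrow> real) \<Rightarrow> real \<Rightarrow> real \<Rightarrow> complex" where
  "usol m \<sigma>0 n vhat k x t =
     (\<Sum>j<n. exp (- complex_of_real (\<sigma>0 * t) * (\<i> * complex_of_real (k j)) ^ m) * complex_of_real (vhat j)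
             * exp (\<i> * complex_of_real (k j * x)))"

text \<open>Q (components l = 0..m-1, as functions of t) solves the linear ODE system obtained
  by substituting q_l(x,t) = Q l t * e^{i k x} into the hyperbolic relaxation system,
  with u0(x) = sum_{j<n} vhat_j e^{i k_j x} in F_n (vhat_j, k_j real) and initial data Q l 0 = (i k)^l * vhat (Fourier coefficient of d_x^l u0).\<close>
definition mode_sol :: "nat \<Rightarrow> real \<Rightarrow> real \<Rightarrow> real \<Rightarrow> real \<Rightarrow> (nat \<Rightarrow> real \<Rightarrow> complex) \<Rightarrow> bool" where
  "mode_sol m \<sigma>0 \<tau> k vh Q \<longleftrightarrow>
     (\<forall>l<m. Q l 0 = (\<i> * complex_of_real k) ^ l * complex_of_real vh) \<and>
     (\<forall>t\<ge>0.
        (Q 0 has_vector_derivative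
           (- complex_of_real \<sigma>0 * (\<i> * complex_of_real k) * Q (m - 1) t)) (at t within {0..}) \<and>
        (\<forall>i\<in>{1..m-1}.
           (Q i has_vector_derivative
              (((\<Sum>j=1..m-1. complex_of_real (pstar \<sigma>0 m i j) * Q j t)
                - (\<Sum>j=1..m-1. complex_of_real (pstar \<sigma>0 m i j) * (\<i> * complex_of_real k) * Q (j - 1) t))
               / complex_of_real \<tau>)) (at t within {0..})))"

end

theory Submission
  imports Defs
begin


lemma re_swap: fixes a x y :: complex assumes "Re a = 0"
  shows "Re (cnj y * a * x) = - Re (cnj x * a * y)"
  using assms by (simp add: algebra_simps)

lemma re_sym: fixes x y :: complex shows "Re (cnj y * x) = Re (cnj x * y)"
  by (simp add: algebra_simps)

lemma flip1: fixes g :: "nat \<Rightarrow> 'a::comm_monoid_add"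
  shows "(\<Sum>l<m. g l) = (\<Sum>l<m. g (m-1-l))"
  by (rule sum.reindex_bij_witness[of _ "\<lambda>l. m-1-l" "\<lambda>l. m-1-l"]) auto

lemma flip2: fixes g :: "nat \<Rightarrow> 'a::comm_monoid_add"
  shows "(\<Sum>i\<in>{1..m-1}. g i) = (\<Sum>i\<in>{1..m-1}. g (m-i))"
  by (rule sum.reindex_bij_witness[of _ "\<lambda>l. m-l" "\<lambda>l. m-l"]) auto

lemma sumV_zero:
  fixes x :: "nat \<Rightarrow> complex" and p :: "nat \<Rightarrow> real" and a :: complex
  assumes Ra: "Re a = 0" and P2: "\<forall>i<m. p i = p (m-1-i)"
  shows "(\<Sum>l<m. p l * Re (cnj (x l) * a * x (m-1-l))) = 0"
proof -
  define V where "V l = p l * Re (cnj (x l) * a * x (m-1-l))" for l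
  have "(\<Sum>l<m. V l) = (\<Sum>l<m. V (m-1-l))" by (rule flip1)
  also have "\<dots> = (\<Sum>l<m. - V l)"
  proof (rule sum.cong[OF refl])
    fix l assume l: "l \<in> {..<m}"
    then have e: "m-1-(m-1-l) = l" by auto
    have "V (m-1-l) = p (m-1-l) * Re (cnj (x (m-1-l)) * a * x l)" by (simp only: V_def e)
    also have "\<dots> = p l * (- Re (cnj (x l) * a * x (m-1-l)))"
    proof -
      have "p (m-1-l) = p l" using P2 l by (metis lessThan_iff)
      then show ?thesis using re_swap[OF Ra, of "x l" "x (m-1-l)"] by (simp only:)
    qed
    also have "\<dots> = - V l" by (simp only: V_def mult_minus_right)
    finally show "V (m-1-l) = - V l" .
  qed
  also have "\<dots> = - (\<Sum>l<m. V l)" by (simp only: sum_negf)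
  finally show ?thesis by (simp add: V_def)
qed

lemma sumU_nonpos:
  fixes x :: "nat \<Rightarrow> complex" and p :: "nat \<Rightarrow> real"
  assumes P1: "\<forall>i\<in>{1..m-1}. p i + p (m-i) \<le> 0 \<and> (2*i \<noteq> m \<longrightarrow> p i + p (m-i) = 0)"
  shows "(\<Sum>i\<in>{1..m-1}. p i * Re (cnj (x i) * x (m-i))) \<le> 0"
proof -
  define R where "R i = Re (cnj (x i) * x (m-i))" for i
  define U where "U i = p i * R i" for i
  have "(\<Sum>i\<in>{1..m-1}. U i) = (\<Sum>i\<in>{1..m-1}. U (m-i))" by (rule flip2)
  also have "\<dots> = (\<Sum>i\<in>{1..m-1}. p (m-i) * R i)"
  proof (rule sum.cong[OF refl])
    fix i assume i: "i \<in> {1..m-1}"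
    then have e: "m-(m-i) = i" by auto
    show "U (m-i) = p (m-i) * R i" unfolding U_def R_def e by (simp only: re_sym)
  qed
  finally have S': "(\<Sum>i\<in>{1..m-1}. U i) = (\<Sum>i\<in>{1..m-1}. p (m-i) * R i)" .
  have "2 * (\<Sum>i\<in>{1..m-1}. U i) = (\<Sum>i\<in>{1..m-1}. U i) + (\<Sum>i\<in>{1..m-1}. p (m-i) * R i)"
    using S' by simp
  also have "\<dots> = (\<Sum>i\<in>{1..m-1}. (p i + p (m-i)) * R i)"
    by (simp only: U_def sum.distrib[symmetric] distrib_right)
  also have "\<dots> \<le> 0"
  proof (rule sum_nonpos)
    fix i assume i: "i \<in> {1..m-1}"
    show "(p i + p (m-i)) * R i \<le> 0"
    proof (cases "2*i = m")
      case True
      then have "m - i = i" by simp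
      then have "R i \<ge> 0" by (simp add: R_def)
      then show ?thesis using P1 i by (simp add: mult_nonpos_nonneg)
    next
      case False then show ?thesis using P1 i by simp
    qed
  qed
  finally show ?thesis by (simp add: U_def R_def)
qed



lemma lessThan_split: "(m::nat) \<ge> 1 \<Longrightarrow> {..<m} = insert 0 {1..m-1}" 
proof (intro set_eqI iffI)
  fix x assume "m \<ge> 1" "x \<in> {..<m}" then have "x < m" by simp
  then have "x = 0 \<or> (1 \<le> x \<and> x \<le> m-1)" by arith
  then show "x \<in> insert 0 {1..m-1}" by auto
next
  fix x assume "m \<ge> 1" "x \<in> insert 0 {1..m-1}" then show "x \<in> {..<m}" by auto
qed

lemma homog_nonpos:
  fixes x :: "nat \<Rightarrow> complex" and p :: "nat \<Rightarrow> real" and a :: complex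
  assumes "Re a = 0" and m: "m \<ge> 1"
    and P2: "\<forall>i<m. p i = p (m-1-i)"
    and P1: "\<forall>i\<in>{1..m-1}. p i + p (m-i) \<le> 0 \<and> (2*i \<noteq> m \<longrightarrow> p i + p (m-i) = 0)"
  shows "Re (cnj (x 0) * (- of_real (p 0) * a * x (m-1)))
       + (\<Sum>i\<in>{1..m-1}. Re (cnj (x i) * (of_real (p i) * (x (m-i) - a * x (m-1-i))))) \<le> 0"
proof -
  have V: "(\<Sum>l<m. p l * Re (cnj (x l) * a * x (m-1-l))) = 0"
    by (rule sumV_zero[OF assms(1) P2])
  have U: "(\<Sum>i\<in>{1..m-1}. p i * Re (cnj (x i) * x (m-i))) \<le> 0"
    by (rule sumU_nonpos[OF P1])
  have "(\<Sum>l<m. p l * Re (cnj (x l) * a * x (m-1-l))) = p 0 * Re (cnj (x 0) * a * x (m-1))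
      + (\<Sum>i\<in>{1..m-1}. p i * Re (cnj (x i) * a * x (m-1-i)))"
    by (simp add: lessThan_split[OF m])
  moreover have "(\<Sum>i\<in>{1..m-1}. Re (cnj (x i) * (of_real (p i) * (x (m-i) - a * x (m-1-i)))))
     = (\<Sum>i\<in>{1..m-1}. p i * Re (cnj (x i) * x (m-i))) - (\<Sum>i\<in>{1..m-1}. p i * Re (cnj (x i) * a * x (m-1-i)))"
  proof -
    have "\<And>i. Re (cnj (x i) * (of_real (p i) * (x (m-i) - a * x (m-1-i))))
       = p i * Re (cnj (x i) * x (m-i)) - p i * Re (cnj (x i) * a * x (m-1-i))"
      by (simp add: algebra_simps)
    then show ?thesis by (simp add: sum_subtractf)
  qed
  moreover have "Re (cnj (x 0) * (- of_real (p 0) * a * x (m-1))) = - (p 0 * Re (cnj (x 0) * a * x (m-1)))"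
    by (simp add: algebra_simps)
  ultimately show ?thesis using U V by linarith
qed



lemma cmod_sq_Re: "(cmod z)^2 = Re (cnj z * z)"
  by (simp only: cmod_power2) (simp add: power2_eq_square)

lemma two_re_le: fixes x f :: complex shows "2 * Re (cnj x * f) \<le> (cmod x)^2 + (cmod f)^2"
proof -
  have "Re (cnj x * f) \<le> cmod (cnj x * f)" by (rule complex_Re_le_cmod)
  also have "\<dots> = cmod x * cmod f" by (simp add: norm_mult)
  finally have "2 * Re (cnj x * f) \<le> 2 * (cmod x * cmod f)" by simp
  also have "\<dots> \<le> (cmod x)^2 + (cmod f)^2" using sum_squares_bound[of "cmod x" "cmod f"] by simp
  finally show ?thesis .
qed

lemma re_div_aux:
  fixes x P F :: complex and \<tau> :: real assumes "\<tau> \<noteq> 0"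
  shows "\<tau> * (2 * Re (cnj x * (P / of_real \<tau> + F))) = 2 * Re (cnj x * P) + \<tau> * (2 * Re (cnj x * F))"
proof -
  have "cnj x * (P / of_real \<tau> + F) = (cnj x * P) / of_real \<tau> + cnj x * F" by (simp add: ring_distribs)
  then have "Re (cnj x * (P / of_real \<tau> + F)) = Re (cnj x * P) / \<tau> + Re (cnj x * F)"
    by (simp add: Re_divide_of_real)
  then show ?thesis using assms by (simp add: field_simps)
qed

lemma energy:
  fixes d f :: "nat \<Rightarrow> real \<Rightarrow> complex" and p :: "nat \<Rightarrow> real" and a :: complex and \<tau> B T :: real
  assumes Ra: "Re a = 0" and m: "m \<ge> 1"
    and P2: "\<forall>i<m. p i = p (m-1-i)"
    and P1: "\<forall>i\<in>{1..m-1}. p i + p (m-i) \<le> 0 \<and> (2*i \<noteq> m \<longrightarrow> p i + p (m-i) = 0)"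
    and tau: "0 < \<tau>" "\<tau> \<le> 1" and T: "T \<ge> 0"
    and D0: "\<And>t. t \<ge> 0 \<Longrightarrow> (d 0 has_vector_derivative (- of_real (p 0) * a * d (m-1) t + f 0 t)) (at t within {0..})"
    and Di: "\<And>t i. t \<ge> 0 \<Longrightarrow> i \<in> {1..m-1} \<Longrightarrow>
      (d i has_vector_derivative (of_real (p i) * (d (m-i) t - a * d (m-1-i) t) / of_real \<tau> + f i t)) (at t within {0..})"
    and fb: "\<And>t l. t \<in> {0..T} \<Longrightarrow> l < m \<Longrightarrow> cmod (f l t) \<le> \<tau> * B"
  shows "(\<Sum>l<m. (if l = 0 then 1 else \<tau>) * (cmod (d l T))^2)
         \<le> exp T * ((\<Sum>l<m. (if l = 0 then 1 else \<tau>) * (cmod (d l 0))^2) + real m * (\<tau>*B)^2 * T)"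
proof -
  define h where "h l = (if l = 0 then 1 else \<tau>)" for l :: nat
  define Dd where "Dd l t = (if l = 0 then - of_real (p 0) * a * d (m-1) t + f 0 t
       else of_real (p l) * (d (m-l) t - a * d (m-1-l) t) / of_real \<tau> + f l t)" for l t
  define E where "E t = (\<Sum>l<m. h l * (cmod (d l t))^2)" for t
  define E' where "E' t = (\<Sum>l<m. h l * (2 * Re (cnj (d l t) * Dd l t)))" for t
  define c where "c = real m * (\<tau>*B)^2"
  have c0: "c \<ge> 0" unfolding c_def by simp
  have der: "(d l has_vector_derivative Dd l t) (at t within {0..})" if "t \<ge> 0" "l < m" for l t
  proof (cases "l = 0")
    case True then show ?thesis using D0[OF that(1)] by (simp add: Dd_def)
  next
    case False then have "l \<in> {1..m-1}" using that by auto
    then show ?thesis using Di[OF that(1)] False by (simp add: Dd_def)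
  qed
  have Eder: "(E has_real_derivative E' t) (at t within {0..})" if t: "t \<ge> 0" for t
  proof -
    define G where "G t = (\<Sum>l<m. of_real (h l) * (cnj (d l t) * d l t))" for t
    have "(G has_vector_derivative (\<Sum>l<m. of_real (h l) * (cnj (d l t) * Dd l t + cnj (Dd l t) * d l t))) (at t within {0..})"
      unfolding G_def
      by (intro has_vector_derivative_sum has_vector_derivative_mult_right has_vector_derivative_mult
             has_vector_derivative_cnj der t) auto
    then have "((\<lambda>t. Re (G t)) has_real_derivative Re (\<Sum>l<m. of_real (h l) * (cnj (d l t) * Dd l t + cnj (Dd l t) * d l t))) (at t within {0..})"
      by (simp add: has_vector_derivative_complex_iff)
    moreover have "(\<lambda>t. Re (G t)) = E"
      by (auto simp: G_def E_def Re_sum cmod_sq_Re)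
    moreover have "Re (\<Sum>l<m. of_real (h l) * (cnj (d l t) * Dd l t + cnj (Dd l t) * d l t)) = E' t"
      by (auto simp: E'_def Re_sum intro!: sum.cong)
    ultimately show ?thesis by simp
  qed
  have Ebound: "E' t \<le> E t + c" if t: "t \<in> {0..T}" for t
  proof -
    let ?x = "\<lambda>l. d l t" and ?f = "\<lambda>l. f l t"
    define H where "H = Re (cnj (?x 0) * (- of_real (p 0) * a * ?x (m-1)))
       + (\<Sum>i\<in>{1..m-1}. Re (cnj (?x i) * (of_real (p i) * (?x (m-i) - a * ?x (m-1-i)))))"
    have H0: "H \<le> 0" unfolding H_def by (rule homog_nonpos[OF Ra m P2 P1])
    have trm: "h i * (2 * Re (cnj (?x i) * Dd i t)) = 2 * Re (cnj (?x i) * (of_real (p i) * (?x (m-i) - a * ?x (m-1-i))))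
       + h i * (2 * Re (cnj (?x i) * ?f i))" if "i \<in> {1..m-1}" for i
      using that tau re_div_aux[of \<tau> "?x i" "of_real (p i) * (?x (m-i) - a * ?x (m-1-i))" "?f i"]
      by (simp add: h_def Dd_def)
    have "E' t = 2 * H + (\<Sum>l<m. h l * (2 * Re (cnj (?x l) * ?f l)))"
    proof -
      have "E' t = h 0 * (2 * Re (cnj (?x 0) * Dd 0 t)) + (\<Sum>i\<in>{1..m-1}. h i * (2 * Re (cnj (?x i) * Dd i t)))"
        by (simp add: E'_def lessThan_split[OF m])
      also have "(\<Sum>i\<in>{1..m-1}. h i * (2 * Re (cnj (?x i) * Dd i t)))
         = (\<Sum>i\<in>{1..m-1}. 2 * Re (cnj (?x i) * (of_real (p i) * (?x (m-i) - a * ?x (m-1-i)))))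
           + (\<Sum>i\<in>{1..m-1}. h i * (2 * Re (cnj (?x i) * ?f i)))"
        unfolding sum.distrib[symmetric] by (rule sum.cong[OF refl trm])
      also have "h 0 * (2 * Re (cnj (?x 0) * Dd 0 t)) = 2 * Re (cnj (?x 0) * (- of_real (p 0) * a * ?x (m-1)))
          + h 0 * (2 * Re (cnj (?x 0) * ?f 0))"
        by (simp add: h_def Dd_def ring_distribs)
      finally show ?thesis
        by (simp add: H_def lessThan_split[OF m] sum_distrib_left)
    qed
    also have "(\<Sum>l<m. h l * (2 * Re (cnj (?x l) * ?f l))) \<le> (\<Sum>l<m. h l * ((cmod (?x l))^2 + (cmod (?f l))^2))"
      by (rule sum_mono, rule mult_left_mono[OF two_re_le]) (use tau in \<open>auto simp: h_def\<close>)
    also have "\<dots> = E t + (\<Sum>l<m. h l * (cmod (?f l))^2)"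
      by (simp add: E_def ring_distribs sum.distrib)
    also have "(\<Sum>l<m. h l * (cmod (?f l))^2) \<le> (\<Sum>l<m. (\<tau>*B)^2)"
    proof (rule sum_mono)
      fix l assume l: "l \<in> {..<m}"
      have "cmod (?f l) \<le> \<tau> * B" using fb[OF t] l by auto
      then have "(cmod (?f l))^2 \<le> (\<tau>*B)^2" by (rule power_mono) simp
      moreover have "h l \<le> 1" "h l \<ge> 0" using tau by (auto simp: h_def)
      ultimately show "h l * (cmod (?f l))^2 \<le> (\<tau>*B)^2"
        by (metis mult_left_le_one_le mult_nonneg_nonneg zero_le_power2 order.trans mult_right_mono)
    qed
    also have "(\<Sum>l<m. (\<tau>*B)^2) = c" by (simp add: c_def)
    finally show ?thesis using H0 by linarith
  qed
  define g where "g t = exp (- t) * E t - c * t" for t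
  define g' where "g' t = exp (- t) * E' t - exp (- t) * E t - c" for t
  have gder: "(g has_derivative (\<lambda>x. g' t * x)) (at t within {0..T})" if "0 \<le> t" "t \<le> T" for t
  proof -
    have "(g has_real_derivative g' t) (at t within {0..})"
      unfolding g_def g'_def
      by (rule derivative_eq_intros Eder refl | use that in simp)+
    then have "(g has_real_derivative g' t) (at t within {0..T})"
      by (rule has_field_derivative_subset) auto
    then show ?thesis by (simp add: has_field_derivative_def)
  qed
  obtain x where x: "x \<in> {0..T}" "g T - g 0 = g' x * (T - 0)"
    using mvt_very_simple[OF T gder] by auto
  have ex0: "exp (- x) > 0" by simp
  have "exp (- x) * E' x \<le> exp (- x) * (E x + c)"
    using Ebound[OF x(1)] ex0 by (intro mult_left_mono) auto
  moreover have "exp (- x) * (E x + c) = exp (- x) * E x + exp (- x) * c" by (rule distrib_left)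
  ultimately have g'1: "g' x \<le> exp (- x) * c - c" unfolding g'_def by linarith
  have "exp (- x) \<le> 1" using x(1) by simp
  then have "exp (- x) * c \<le> 1 * c" using c0 by (rule mult_right_mono)
  then have "g' x \<le> 0" using g'1 by linarith
  then have "g' x * (T - 0) \<le> 0" using T by (simp add: mult_nonpos_nonneg)
  then have "g T \<le> g 0" using x(2) by linarith
  then have le: "exp (- T) * E T \<le> E 0 + c * T" by (simp add: g_def)
  have "E T = exp T * (exp (- T) * E T)" by (simp add: mult.assoc[symmetric] exp_minus_inverse)
  also have "\<dots> \<le> exp T * (E 0 + c * T)" using le by (intro mult_left_mono) auto
  finally have "E T \<le> exp T * (E 0 + c * T)" .
  then show ?thesis unfolding E_def h_def c_def .
qed



definition ee :: "nat \<Rightarrow> nat \<Rightarrow> nat" where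
  "ee m i = (if 2*(m-i) \<le> m then m-i-1 else i)"

lemma pstar_p: "i < m \<Longrightarrow> pstar \<sigma> m i (m-i) = \<sigma> * (-1)^(ee m i)"
  by (auto simp: pstar_def ee_def)

lemma pow_par: "even A = even B \<Longrightarrow> (-1::real)^A = (-1)^B"
  by (simp add: minus_one_power_iff)

lemma ee_P2eq: "i < m \<Longrightarrow> ee m i = ee m (m-1-i)"
  unfolding ee_def by (split if_split)+ arith

lemma ee_P2: "i < m \<Longrightarrow> even (ee m i) = even (ee m (m-1-i))"
  using ee_P2eq[of i m] by simp

lemma ee_P1a: "1 \<le> i \<Longrightarrow> i \<le> m - 1 \<Longrightarrow> 2*i \<noteq> m \<Longrightarrow> ee m (m-i) = Suc (ee m i) \<or> ee m i = Suc (ee m (m-i))"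
  unfolding ee_def by (split if_split)+ arith

lemma ee_P1: "1 \<le> i \<Longrightarrow> i \<le> m - 1 \<Longrightarrow> 2*i \<noteq> m \<Longrightarrow> even (ee m i) \<noteq> even (ee m (m-i))"
  using ee_P1a[of i m] by auto

lemma ee_mid: "2*i = m \<Longrightarrow> m \<ge> 2 \<Longrightarrow> ee m i = m div 2 - 1"
proof -
  assume a: "2*i = m" "m \<ge> 2"
  then have "m - i = i" "m div 2 = i" by auto
  then show ?thesis using a unfolding ee_def by simp
qed

lemma P2_fact:
  assumes "m \<ge> 2"
  shows "\<forall>i<m. pstar \<sigma> m i (m-i) = pstar \<sigma> m (m-1-i) (m-(m-1-i))"
proof (intro allI impI)
  fix i assume i: "i < m"
  have a1: "pstar \<sigma> m i (m-i) = \<sigma> * (-1)^(ee m i)" by (rule pstar_p[OF i])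
  have a2: "pstar \<sigma> m (m-1-i) (m-(m-1-i)) = \<sigma> * (-1)^(ee m (m-1-i))"
    by (rule pstar_p) (use i in simp)
  show "pstar \<sigma> m i (m-i) = pstar \<sigma> m (m-1-i) (m-(m-1-i))"
    unfolding a1 a2 using pow_par[OF ee_P2[OF i]] by simp
qed

lemma P1_fact:
  assumes m: "m \<ge> 2" and ev: "even m \<Longrightarrow> \<sigma> = (-1) ^ (m div 2)"
  shows "\<forall>i\<in>{1..m-1}. pstar \<sigma> m i (m-i) + pstar \<sigma> m (m-i) (m-(m-i)) \<le> 0 \<and>
      (2*i \<noteq> m \<longrightarrow> pstar \<sigma> m i (m-i) + pstar \<sigma> m (m-i) (m-(m-i)) = 0)"
proof
  fix i assume i: "i \<in> {1..m-1}"
  then have i1: "i < m" "m - i < m" by auto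
  have a1: "pstar \<sigma> m i (m-i) = \<sigma> * (-1)^(ee m i)" by (rule pstar_p[OF i1(1)])
  have a2: "pstar \<sigma> m (m-i) (m-(m-i)) = \<sigma> * (-1)^(ee m (m-i))" by (rule pstar_p[OF i1(2)])
  show "pstar \<sigma> m i (m-i) + pstar \<sigma> m (m-i) (m-(m-i)) \<le> 0 \<and>
      (2*i \<noteq> m \<longrightarrow> pstar \<sigma> m i (m-i) + pstar \<sigma> m (m-i) (m-(m-i)) = 0)"
  proof (cases "2*i = m")
    case True
    then have e: "m - i = i" by simp
    have em: "even m" unfolding True[symmetric] by simp
    have s: "\<sigma> = (-1)^(m div 2)" by (rule ev[OF em])
    have md: "m div 2 = i" using True by auto
    have "m div 2 + (m div 2 - 1) = Suc (2*(i-1))" using md i by auto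
    then have "even (m div 2 + (m div 2 - 1)) = False" by simp
    then have "(-1::real)^(m div 2 + (m div 2 - 1)) = -1" by (simp add: minus_one_power_iff)
    then have neg: "(-1::real)^(m div 2) * (-1)^(m div 2 - 1) = -1" by (simp add: power_add)
    have "pstar \<sigma> m i (m-i) + pstar \<sigma> m (m-i) (m-(m-i)) = \<sigma> * (-1)^(ee m i) + \<sigma> * (-1)^(ee m (m-i))"
      by (simp only: a1 a2)
    also have "\<dots> = 2 * (\<sigma> * (-1)^(m div 2 - 1))" by (simp only: e ee_mid[OF True m])
    also have "\<dots> = 2 * ((-1)^(m div 2) * (-1)^(m div 2 - 1))" by (simp only: s)
    also have "\<dots> = -2" by (simp only: neg)
    finally show ?thesis using True by simp
  next
    case False
    have "(-1::real)^(ee m i) + (-1)^(ee m (m-i)) = 0"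
      using ee_P1[of i m] i False by (auto simp: minus_one_power_iff)
    then have "\<sigma> * (-1::real)^(ee m i) + \<sigma> * (-1)^(ee m (m-i)) = 0"
      by (metis distrib_left mult_zero_right)
    then show ?thesis unfolding a1 a2 using False by simp
  qed
qed

lemma p0_fact: "m \<ge> 1 \<Longrightarrow> pstar \<sigma> m 0 (m - 0) = \<sigma>"
  by (simp add: pstar_def)

lemma pnz_fact: "\<sigma> \<noteq> 0 \<Longrightarrow> i < m \<Longrightarrow> pstar \<sigma> m i (m-i) \<noteq> 0"
  by (simp add: pstar_p)

lemma sigma_nz: fixes \<sigma> :: real assumes "odd m \<Longrightarrow> \<sigma> = 1 \<or> \<sigma> = -1" "even m \<Longrightarrow> \<sigma> = (-1) ^ (m div 2)"
  shows "\<sigma> \<noteq> 0"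
proof (cases "even m")
  case True
  have "(-1::real)^(m div 2) \<noteq> 0" by (rule power_not_zero) simp
  then show ?thesis using assms(2)[OF True] by simp
next
  case False then show ?thesis using assms(1) by auto
qed

lemma collapse:
  fixes F :: "nat \<Rightarrow> complex"
  assumes i: "i \<in> {1..m-1}"
  shows "(\<Sum>j=1..m-1. of_real (pstar \<sigma> m i j) * F j) = of_real (pstar \<sigma> m i (m-i)) * F (m-i)"
proof -
  have "(\<Sum>j=1..m-1. of_real (pstar \<sigma> m i j) * F j) = (\<Sum>j=1..m-1. if j = m - i then of_real (pstar \<sigma> m i (m-i)) * F (m-i) else 0)"
    by (rule sum.cong) (use i in \<open>auto simp: pstar_def\<close>)
  also have "\<dots> = of_real (pstar \<sigma> m i (m-i)) * F (m-i)"
  proof -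
    have "m - i \<in> {1..m-1}" using i by auto
    then show ?thesis by simp
  qed
  finally show ?thesis .
qed



fun gam :: "(nat \<Rightarrow> real) \<Rightarrow> nat \<Rightarrow> complex \<Rightarrow> complex \<Rightarrow> nat \<Rightarrow> complex" where
  "gam p m a c 0 = 0"
| "gam p m a c (Suc j) = a * gam p m a c j + a^(m - Suc j) * c / of_real (p (m - Suc j))"

lemma gam_key:
  assumes i: "i \<in> {1..m-1}" and pnz: "p i \<noteq> 0"
  shows "of_real (p i) * (gam p m a c (m-i) - a * gam p m a c (m-1-i)) = a^i * c"
proof -
  have e: "m - i = Suc (m-1-i)" "m - Suc (m-1-i) = i" using i by auto
  show ?thesis using pnz by (simp only: e gam.simps) (simp add: field_simps)
qed

lemma alg_i:
  fixes P a Q1 Q0 A1 A0 G1 G0 Gi Ai c w t :: complex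
  assumes t: "t \<noteq> 0" and A: "A1 = a * A0" and K: "P * (G1 - a * G0) = Ai * c"
  shows "P * (Q1 - a * Q0) / t - (Ai + t * Gi) * (c * w)
       = P * ((Q1 - (A1 + t * G1) * w) - a * (Q0 - (A0 + t * G0) * w)) / t + (- (t * Gi * c * w))"
proof -
  have "P * ((Q1 - (A1 + t * G1) * w) - a * (Q0 - (A0 + t * G0) * w)) = P * (Q1 - a * Q0) - t * (P * (G1 - a * G0)) * w"
    using A by (simp add: algebra_simps)
  also have "\<dots> = P * (Q1 - a * Q0) - t * (Ai * c) * w" by (simp add: K)
  finally show ?thesis using t by (simp add: field_simps)
qed

lemma alg_0:
  fixes s a Q A G w c t :: complex
  assumes A: "a * A = Am" and c: "c = - s * Am"
  shows "- s * a * Q - (1 + t * 0) * (c * w) = - s * a * (Q - (A + t * G) * w) + (- (t * s * a * G * w))"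
  using A c by (simp add: algebra_simps)



lemma mode_bound:
  fixes m :: nat and \<sigma> T k vh :: real
  assumes m: "m \<ge> 2" and so: "odd m \<Longrightarrow> \<sigma> = 1 \<or> \<sigma> = -1"
    and se: "even m \<Longrightarrow> \<sigma> = (-1) ^ (m div 2)" and T: "T \<ge> 0"
  shows "\<exists>C. \<forall>\<tau>. 0 < \<tau> \<and> \<tau> < 1 \<longrightarrow> (\<forall>Q. mode_sol m \<sigma> \<tau> k vh Q \<longrightarrow>
     cmod (Q 0 T - exp (- complex_of_real (\<sigma> * T) * (\<i> * complex_of_real k) ^ m) * complex_of_real vh) \<le> C * \<tau>)"
proof -
  define p where "p i = pstar \<sigma> m i (m-i)" for i
  define a where "a = \<i> * complex_of_real k"
  define c where "c = - of_real \<sigma> * a^m"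
  define \<gamma> where "\<gamma> = gam p m a c"
  define w where "w t = exp (t *\<^sub>R c) * of_real vh" for t
  define Wb where "Wb = exp (T * cmod c) * \<bar>vh\<bar>"
  define B where "B = (cmod (of_real \<sigma> * a * \<gamma> (m-1)) + (\<Sum>l<m. cmod (\<gamma> l * c))) * Wb"
  define G where "G = (\<Sum>l<m. (cmod (\<gamma> l * of_real vh))^2)"
  define K where "K = exp T * (G + real m * B^2 * T)"
  have m1: "m \<ge> 1" using m by simp
  have snz: "\<sigma> \<noteq> 0" by (rule sigma_nz[OF so se])
  have pnz: "p i \<noteq> 0" if "i < m" for i unfolding p_def by (rule pnz_fact[OF snz that])
  have P2: "\<forall>i<m. p i = p (m-1-i)" unfolding p_def using P2_fact[OF m] by simp
  have P1: "\<forall>i\<in>{1..m-1}. p i + p (m-i) \<le> 0 \<and> (2*i \<noteq> m \<longrightarrow> p i + p (m-i) = 0)"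
    unfolding p_def using P1_fact[OF m se] by simp
  have p0: "p 0 = \<sigma>" unfolding p_def using p0_fact[OF m1] by simp
  have Ra: "Re a = 0" by (simp add: a_def)
  have wder: "(w has_vector_derivative c * w t) (at t within {0..})" for t
  proof -
    have "((\<lambda>t. exp (t *\<^sub>R c) * of_real vh) has_vector_derivative exp (t *\<^sub>R c) * c * of_real vh) (at t within {0..})"
      by (intro has_vector_derivative_mult_left exp_scaleR_has_vector_derivative_right)
    moreover have "w = (\<lambda>t. exp (t *\<^sub>R c) * of_real vh)" by (simp add: w_def fun_eq_iff)
    moreover have "exp (t *\<^sub>R c) * c * of_real vh = c * w t" by (simp add: w_def)
    ultimately show ?thesis by (simp only:)
  qed
  have wb: "cmod (w t) \<le> Wb" if t: "t \<in> {0..T}" for t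
  proof -
    have "Re (t *\<^sub>R c) = t * Re c" by simp
    also have "\<dots> \<le> t * cmod c" using t by (intro mult_left_mono complex_Re_le_cmod) auto
    also have "\<dots> \<le> T * cmod c" using t by (intro mult_right_mono) auto
    finally have "exp (Re (t *\<^sub>R c)) \<le> exp (T * cmod c)" by simp
    then show ?thesis unfolding w_def Wb_def by (simp add: norm_mult mult_right_mono)
  qed
  have Wb0: "Wb \<ge> 0" unfolding Wb_def by simp
  have B0: "B \<ge> 0" unfolding B_def using Wb0 by (simp add: sum_nonneg)
  show ?thesis
  proof (intro exI[of _ "sqrt K"] allI impI)
    fix \<tau> :: real and Q assume \<tau>: "0 < \<tau> \<and> \<tau> < 1" and ms: "mode_sol m \<sigma> \<tau> k vh Q"
    have tau: "0 < \<tau>" "\<tau> \<le> 1" using \<tau> by auto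
    define d where "d l t = Q l t - (a^l + of_real \<tau> * \<gamma> l) * w t" for l t
    define f where "f l t = (if l = 0 then - (of_real \<tau> * of_real \<sigma> * a * \<gamma> (m-1) * w t)
        else - (of_real \<tau> * \<gamma> l * c * w t))" for l t
    have init: "\<forall>l<m. Q l 0 = a^l * of_real vh" using ms unfolding mode_sol_def a_def by simp
    have Q0d: "(Q 0 has_vector_derivative (- of_real \<sigma> * a * Q (m-1) t)) (at t within {0..})" if "t \<ge> 0" for t
      using ms that unfolding mode_sol_def a_def by simp
    have Qid: "(Q i has_vector_derivative (of_real (p i) * (Q (m-i) t - a * Q (m-1-i) t) / of_real \<tau>)) (at t within {0..})"
      if t: "t \<ge> 0" and i: "i \<in> {1..m-1}" for t i
    proof -
      have D: "(Q i has_vector_derivative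
           (((\<Sum>j=1..m-1. complex_of_real (pstar \<sigma> m i j) * Q j t)
                - (\<Sum>j=1..m-1. complex_of_real (pstar \<sigma> m i j) * (a * Q (j - 1) t)))
               / complex_of_real \<tau>)) (at t within {0..})"
        using ms t i unfolding mode_sol_def a_def by (simp add: mult.assoc)
      have c1: "(\<Sum>j=1..m-1. complex_of_real (pstar \<sigma> m i j) * Q j t) = of_real (pstar \<sigma> m i (m-i)) * Q (m-i) t"
        by (rule collapse[OF i])
      have c2: "(\<Sum>j=1..m-1. complex_of_real (pstar \<sigma> m i j) * (a * Q (j - 1) t)) = of_real (pstar \<sigma> m i (m-i)) * (a * Q (m-i-1) t)"
        by (rule collapse[OF i])
      have D': "(Q i has_vector_derivative ((of_real (pstar \<sigma> m i (m-i)) * Q (m-i) t - of_real (pstar \<sigma> m i (m-i)) * (a * Q (m-i-1) t)) / of_real \<tau>)) (at t within {0..})"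
        using D unfolding c1 c2 .
      have eq: "(of_real (pstar \<sigma> m i (m-i)) * Q (m-i) t - of_real (pstar \<sigma> m i (m-i)) * (a * Q (m-i-1) t)) / of_real \<tau>
         = of_real (p i) * (Q (m-i) t - a * Q (m-1-i) t) / of_real \<tau>"
        by (simp add: p_def right_diff_distrib)
      show ?thesis using D' unfolding eq .
    qed
    have gam0: "\<gamma> 0 = 0" by (simp add: \<gamma>_def)
    have D0: "(d 0 has_vector_derivative (- of_real (p 0) * a * d (m-1) t + f 0 t)) (at t within {0..})"
      if t: "t \<ge> 0" for t
    proof -
      have "(d 0 has_vector_derivative (- of_real \<sigma> * a * Q (m-1) t - (a^0 + of_real \<tau> * \<gamma> 0) * (c * w t))) (at t within {0..})"
        unfolding d_def by (intro has_vector_derivative_diff has_vector_derivative_mult_right Q0d t wder)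
      moreover have pw: "a^m = a * a^(m-1)" using m1 by (metis power_Suc Suc_diff_1 less_le_trans zero_less_one)
      moreover have "- of_real \<sigma> * a * Q (m-1) t - (a^0 + of_real \<tau> * \<gamma> 0) * (c * w t)
          = - of_real (p 0) * a * d (m-1) t + f 0 t"
        unfolding p0 d_def f_def gam0 c_def pw by (simp add: algebra_simps)
      ultimately show ?thesis by (metis has_vector_derivative_eq_rhs)
    qed
    have Di: "(d i has_vector_derivative (of_real (p i) * (d (m-i) t - a * d (m-1-i) t) / of_real \<tau> + f i t)) (at t within {0..})"
      if t: "t \<ge> 0" and i: "i \<in> {1..m-1}" for t i
    proof -
      have "(d i has_vector_derivative (of_real (p i) * (Q (m-i) t - a * Q (m-1-i) t) / of_real \<tau>
            - (a^i + of_real \<tau> * \<gamma> i) * (c * w t))) (at t within {0..})"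
        unfolding d_def by (intro has_vector_derivative_diff has_vector_derivative_mult_right Qid t i wder)
      moreover have "a^(m-i) = a * a^(m-1-i)"
      proof -
        have "m - i = Suc (m-1-i)" using i by auto
        then show ?thesis by simp
      qed
      moreover have "of_real (p i) * (\<gamma> (m-i) - a * \<gamma> (m-1-i)) = a^i * c"
        unfolding \<gamma>_def by (rule gam_key[OF i pnz]) (use i in auto)
      moreover have "of_real \<tau> \<noteq> (0::complex)" using tau by simp
      ultimately show ?thesis
        using alg_i[of "of_real \<tau>" "a^(m-i)" a "a^(m-1-i)" "of_real (p i)" "\<gamma> (m-i)" "\<gamma> (m-1-i)" "a^i" c
           "Q (m-i) t" "Q (m-1-i) t" "\<gamma> i" "w t"] i
        by (simp add: d_def f_def)
    qed
    have fb: "cmod (f l t) \<le> \<tau> * B" if t: "t \<in> {0..T}" and l: "l < m" for t l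
    proof (cases "l = 0")
      case True
      have "cmod (f l t) = \<tau> * (cmod (of_real \<sigma> * a * \<gamma> (m-1)) * cmod (w t))"
        using True tau by (simp add: f_def norm_mult)
      also have "\<dots> \<le> \<tau> * (cmod (of_real \<sigma> * a * \<gamma> (m-1)) * Wb)"
        using wb[OF t] tau by (intro mult_left_mono) auto
      also have "\<dots> \<le> \<tau> * B" unfolding B_def using tau Wb0
        by (intro mult_left_mono mult_right_mono) (auto simp: sum_nonneg)
      finally show ?thesis .
    next
      case False
      have s1: "cmod (\<gamma> l * c) \<le> (\<Sum>l<m. cmod (\<gamma> l * c))"
        using l by (intro member_le_sum) auto
      then have "cmod (\<gamma> l * c) \<le> cmod (of_real \<sigma> * a * \<gamma> (m-1)) + (\<Sum>l<m. cmod (\<gamma> l * c))"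
        using norm_ge_zero[of "of_real \<sigma> * a * \<gamma> (m-1)"] by linarith
      then have s2: "\<tau> * (cmod (\<gamma> l * c) * Wb) \<le> \<tau> * B" unfolding B_def using tau Wb0
        by (intro mult_left_mono mult_right_mono) auto
      have "cmod (f l t) = \<tau> * (cmod (\<gamma> l * c) * cmod (w t))"
        using False tau by (simp add: f_def norm_mult)
      also have "\<dots> \<le> \<tau> * (cmod (\<gamma> l * c) * Wb)"
        using wb[OF t] tau by (intro mult_left_mono) auto
      also note s2
      finally show ?thesis .
    qed
    have en: "(\<Sum>l<m. (if l = 0 then 1 else \<tau>) * (cmod (d l T))^2)
         \<le> exp T * ((\<Sum>l<m. (if l = 0 then 1 else \<tau>) * (cmod (d l 0))^2) + real m * (\<tau>*B)^2 * T)"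
      by (rule energy[OF Ra m1 P2 P1 tau T D0 Di fb])
    have E0: "(\<Sum>l<m. (if l = 0 then 1 else \<tau>) * (cmod (d l 0))^2) \<le> \<tau>^2 * G"
    proof -
      have "(\<Sum>l<m. (if l = 0 then 1 else \<tau>) * (cmod (d l 0))^2) \<le> (\<Sum>l<m. \<tau>^2 * (cmod (\<gamma> l * of_real vh))^2)"
      proof (rule sum_mono)
        fix l assume l: "l \<in> {..<m}"
        have "d l 0 = - (of_real \<tau> * (\<gamma> l * of_real vh))"
          using init l by (simp add: d_def w_def algebra_simps)
        then have "(cmod (d l 0))^2 = \<tau>^2 * (cmod (\<gamma> l * of_real vh))^2"
          using tau by (simp add: norm_mult power_mult_distrib)
        moreover have "(if l = 0 then 1 else \<tau>) \<le> 1" "0 \<le> (if l = 0 then 1 else \<tau>)" using tau by auto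
        ultimately show "(if l = 0 then 1 else \<tau>) * (cmod (d l 0))^2 \<le> \<tau>^2 * (cmod (\<gamma> l * of_real vh))^2"
          by (metis mult_left_le_one_le zero_le_power2 mult_nonneg_nonneg)
      qed
      then show ?thesis by (simp add: G_def sum_distrib_left)
    qed
    have "(cmod (d 0 T))^2 \<le> (\<Sum>l<m. (if l = 0 then 1 else \<tau>) * (cmod (d l T))^2)"
    proof -
      have "(cmod (d 0 T))^2 = (if (0::nat) = 0 then 1 else \<tau>) * (cmod (d 0 T))^2" by simp
      also have "\<dots> \<le> (\<Sum>l<m. (if l = 0 then 1 else \<tau>) * (cmod (d l T))^2)"
        using m1 tau by (intro member_le_sum) auto
      finally show ?thesis .
    qed
    also note en
    also have "exp T * ((\<Sum>l<m. (if l = 0 then 1 else \<tau>) * (cmod (d l 0))^2) + real m * (\<tau>*B)^2 * T)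
        \<le> exp T * (\<tau>^2 * G + real m * (\<tau>*B)^2 * T)"
      using E0 by simp
    also have "\<dots> = \<tau>^2 * K" by (simp add: K_def power_mult_distrib algebra_simps)
    finally have sq: "(cmod (d 0 T))^2 \<le> \<tau>^2 * K" .
    have "cmod (d 0 T) = sqrt ((cmod (d 0 T))^2)" by simp
    also have "\<dots> \<le> sqrt (\<tau>^2 * K)" using sq by (rule real_sqrt_le_mono)
    also have "\<dots> = \<tau> * sqrt K" using tau by (simp add: real_sqrt_mult)
    finally have "cmod (d 0 T) \<le> sqrt K * \<tau>" by (simp add: mult.commute)
    moreover have "d 0 T = Q 0 T - exp (- complex_of_real (\<sigma> * T) * (\<i> * complex_of_real k) ^ m) * complex_of_real vh"
      by (simp add: d_def gam0 w_def c_def a_def scaleR_conv_of_real algebra_simps)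
    ultimately show "cmod (Q 0 T - exp (- complex_of_real (\<sigma> * T) * (\<i> * complex_of_real k) ^ m) * complex_of_real vh) \<le> sqrt K * \<tau>"
      by simp
  qed
qed



theorem theorem3:
  fixes m n :: nat and \<sigma>0 T :: real and vhat :: "nat \<Rightarrow> real" and k :: "nat \<Rightarrow> real"
  assumes "m \<ge> 2"
    and "odd m \<Longrightarrow> \<sigma>0 = 1 \<or> \<sigma>0 = -1"
    and "even m \<Longrightarrow> \<sigma>0 = (-1) ^ (m div 2)"
    and "T \<ge> 0"
  shows "\<exists>C \<tau>0. \<tau>0 > 0 \<and>
           (\<forall>\<tau>. 0 < \<tau> \<and> \<tau> < \<tau>0 \<longrightarrow>
              (\<forall>Q :: nat \<Rightarrow> nat \<Rightarrow> real \<Rightarrow> complex.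
                 (\<forall>j<n. mode_sol m \<sigma>0 \<tau> (k j) (vhat j) (Q j)) \<longrightarrow>
                 (\<forall>x::real. cmod ((\<Sum>j<n. Q j 0 T * exp (\<i> * complex_of_real (k j * x)))
                                    - usol m \<sigma>0 n vhat k x T) \<le> C * \<tau>)))"
proof -
  let ?w = "\<lambda>j. exp (- complex_of_real (\<sigma>0 * T) * (\<i> * complex_of_real (k j)) ^ m) * complex_of_real (vhat j)"
  have "\<forall>j. \<exists>C. \<forall>\<tau>. 0 < \<tau> \<and> \<tau> < 1 \<longrightarrow> (\<forall>Q. mode_sol m \<sigma>0 \<tau> (k j) (vhat j) Q \<longrightarrow>
     cmod (Q 0 T - ?w j) \<le> C * \<tau>)"
    using mode_bound[OF assms] by blast
  then obtain Cf where Cf: "\<And>j \<tau> Q. 0 < \<tau> \<Longrightarrow> \<tau> < 1 \<Longrightarrow> mode_sol m \<sigma>0 \<tau> (k j) (vhat j) Q \<Longrightarrow>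
     cmod (Q 0 T - ?w j) \<le> Cf j * \<tau>"
    by metis
  have main: "cmod ((\<Sum>j<n. Q j 0 T * exp (\<i> * complex_of_real (k j * x))) - usol m \<sigma>0 n vhat k x T)
        \<le> (\<Sum>j<n. Cf j) * \<tau>"
    if \<tau>: "0 < \<tau> \<and> \<tau> < 1" and ms: "\<forall>j<n. mode_sol m \<sigma>0 \<tau> (k j) (vhat j) (Q j)"
    for \<tau> :: real and Q :: "nat \<Rightarrow> nat \<Rightarrow> real \<Rightarrow> complex" and x :: real
  proof -
    have "(\<Sum>j<n. Q j 0 T * exp (\<i> * complex_of_real (k j * x))) - usol m \<sigma>0 n vhat k x T
        = (\<Sum>j<n. (Q j 0 T - ?w j) * exp (\<i> * complex_of_real (k j * x)))"
      unfolding usol_def sum_subtractf[symmetric] by (rule sum.cong) (simp_all add: left_diff_distrib)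
    also have "cmod \<dots> \<le> (\<Sum>j<n. cmod ((Q j 0 T - ?w j) * exp (\<i> * complex_of_real (k j * x))))"
      by (rule norm_sum)
    also have "\<dots> = (\<Sum>j<n. cmod (Q j 0 T - ?w j))"
    proof (rule sum.cong[OF refl])
      fix j
      have "cmod (exp (\<i> * complex_of_real (k j * x))) = 1" by (rule norm_exp_i_times)
      then show "cmod ((Q j 0 T - ?w j) * exp (\<i> * complex_of_real (k j * x))) = cmod (Q j 0 T - ?w j)"
        by (simp only: norm_mult mult_1_right)
    qed
    also have "\<dots> \<le> (\<Sum>j<n. Cf j * \<tau>)"
      by (rule sum_mono) (use Cf \<tau> ms in auto)
    also have "\<dots> = (\<Sum>j<n. Cf j) * \<tau>" by (simp add: sum_distrib_right)
    finally show "cmod ((\<Sum>j<n. Q j 0 T * exp (\<i> * complex_of_real (k j * x))) - usol m \<sigma>0 n vhat k x T)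
        \<le> (\<Sum>j<n. Cf j) * \<tau>" .
  qed
  show ?thesis
    apply (rule exI[of _ "\<Sum>j<n. Cf j"], rule exI[of _ 1])
    using main zero_less_one by blast
qed


end
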